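(* Let $\tau>3$. For Lebesgue-almost every $\gamma>0$ the following holds: if $\alpha$ is an isolated point of $D_{\gamma,\tau}$, with convergents $p_n/q_n$, then there exists $N\in\mathbb{N}$ such that for every even $m>N$ there is an even $n<m$ with $$\frac{p_n}{q_n}+\frac{\gamma}{q_n^{\tau+1}}\ge\frac{p_m}{q_m}-\frac{\gamma}{q_m^{\tau+1}}-\frac{2\gamma}{q_m^{\tau-1}}.$$
   Context: For $x\in\mathbb{R}$, $\|x\|:=\min_{p\in\mathbb{Z}}|x-p|$; $\mathbb{N}=\{1,2,\dots\}$. For $\gamma>0,\tau\ge1$, $D_{\gamma,\tau}:=\{\alpha\in(0,1): \|q\alpha\|\ge\gamma/q^\tau\ \forall q\in\mathbb{N}\}$; its elements are irrational. For irrational $\alpha\in(0,1)$ write $\alpha=\cfrac{1}{a_1+\cfrac{1}{a_2+\cdots}}$, and let $p_n/q_n$ ($n\ge0$) be its convergents: $p_{-1}=1,q_{-1}=0,p_0=0,q_0=1$, $p_n=a_np_{n-1}+p_{n-2}$, $q_n=a_nq_{n-1}+q_{n-2}$. *)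

theory Defs
  imports "HOL-Analysis.Analysis"
begin

definition dist_int :: "real \<Rightarrow> real" where
  "dist_int x = (INF p::int. \<bar>x - of_int p\<bar>)"

definition Dset :: "real \<Rightarrow> real \<Rightarrow> real set" where
  "Dset \<gamma> \<tau> = {\<alpha>. 0 < \<alpha> \<and> \<alpha> < 1 \<and>
      (\<forall>q::nat. q \<ge> 1 \<longrightarrow> dist_int (real q * \<alpha>) \<ge> \<gamma> / real q powr \<tau>)}"

fun cf_rem :: "real \<Rightarrow> nat \<Rightarrow> real" where
  "cf_rem \<alpha> 0 = \<alpha>"
| "cf_rem \<alpha> (Suc k) = frac (1 / cf_rem \<alpha> k)"

definition cf_a :: "real \<Rightarrow> nat \<Rightarrow> int" where
  "cf_a \<alpha> n = \<lfloor>1 / cf_rem \<alpha> (n - 1)\<rfloor>"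

text \<open>Shifted indices: cfP a k = p_(k-1), cfQ a k = q_(k-1).\<close>
fun cfP :: "real \<Rightarrow> nat \<Rightarrow> int" where
  "cfP \<alpha> 0 = 1"
| "cfP \<alpha> (Suc 0) = 0"
| "cfP \<alpha> (Suc (Suc k)) = cf_a \<alpha> (Suc k) * cfP \<alpha> (Suc k) + cfP \<alpha> k"

fun cfQ :: "real \<Rightarrow> nat \<Rightarrow> int" where
  "cfQ \<alpha> 0 = 0"
| "cfQ \<alpha> (Suc 0) = 1"
| "cfQ \<alpha> (Suc (Suc k)) = cf_a \<alpha> (Suc k) * cfQ \<alpha> (Suc k) + cfQ \<alpha> k"

definition conv_p :: "real \<Rightarrow> nat \<Rightarrow> int" where "conv_p \<alpha> n = cfP \<alpha> (Suc n)"
definition conv_q :: "real \<Rightarrow> nat \<Rightarrow> int" where "conv_q \<alpha> n = cfQ \<alpha> (Suc n)"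

end

theory Submission
  imports Defs
begin


context
  fixes \<alpha> :: real
  assumes a0: "0 < \<alpha>" and a1: "\<alpha> < 1" and irr: "\<alpha> \<notin> \<rat>"
begin

lemma rem_props: "0 < cf_rem \<alpha> k \<and> cf_rem \<alpha> k < 1 \<and> cf_rem \<alpha> k \<notin> \<rat>"
proof (induction k)
  case 0 then show ?case using a0 a1 irr by simp
next
  case (Suc k)
  define r where "r = cf_rem \<alpha> k"
  have r: "0 < r" "r < 1" "r \<notin> \<rat>" using Suc r_def by auto
  have i1: "1 / r \<notin> \<rat>"
  proof
    assume "1 / r \<in> \<rat>"
    then have "inverse (1 / r) \<in> \<rat>" by (rule Rats_inverse)
    then show False using r by simp
  qed
  have i2: "frac (1 / r) \<notin> \<rat>"
  proof
    assume "frac (1 / r) \<in> \<rat>"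
    then have "frac (1/r) + of_int \<lfloor>1/r\<rfloor> \<in> \<rat>" by simp
    then show False using i1 by (simp add: frac_def)
  qed
  have "frac (1/r) \<noteq> 0" using i2 by (metis Rats_0)
  then have "0 < frac (1/r)" using frac_ge_0[of "1/r"] by linarith
  then show ?case using i2 frac_lt_1[of "1/r"] by (simp add: r_def)
qed

lemma a_ge1: "cf_a \<alpha> (Suc k) \<ge> 1"
proof -
  have "0 < cf_rem \<alpha> k" "cf_rem \<alpha> k < 1" using rem_props by auto
  then have "1 < 1 / cf_rem \<alpha> k" by simp
  then show ?thesis by (simp add: cf_a_def)
qed

lemma rem_Suc: "1 / cf_rem \<alpha> k = of_int (cf_a \<alpha> (Suc k)) + cf_rem \<alpha> (Suc k)"
  by (simp add: cf_a_def frac_def)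

lemma Q_props: "0 \<le> cfQ \<alpha> k \<and> 1 \<le> cfQ \<alpha> (Suc k) \<and> int k \<le> cfQ \<alpha> (Suc k) \<and> (k \<ge> 1 \<longrightarrow> 1 \<le> cfQ \<alpha> k)
   \<and> cfQ \<alpha> (Suc k) \<le> cfQ \<alpha> (Suc (Suc k))"
proof (induction k)
  case 0
  have "cfQ \<alpha> 2 = cf_a \<alpha> 1" by (simp add: numeral_2_eq_2)
  then show ?case using a_ge1[of 0] by (simp add: numeral_2_eq_2)
next
  case (Suc k)
  have a: "cf_a \<alpha> (Suc (Suc k)) \<ge> 1" using a_ge1 by blast
  have q2: "cfQ \<alpha> (Suc (Suc k)) \<ge> 1" using Suc by linarith
  have "cf_a \<alpha> (Suc (Suc k)) * cfQ \<alpha> (Suc (Suc k)) \<ge> 1 * cfQ \<alpha> (Suc (Suc k))"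
    using a q2 by (intro mult_right_mono) auto
  then have q3: "cfQ \<alpha> (Suc (Suc (Suc k))) \<ge> cfQ \<alpha> (Suc (Suc k)) + cfQ \<alpha> (Suc k)" by simp
  have "int (Suc k) \<le> cfQ \<alpha> (Suc (Suc k))"
  proof (cases k)
    case 0
    then show ?thesis using Suc by simp
  next
    case (Suc j)
    have "cf_a \<alpha> (Suc k) * cfQ \<alpha> (Suc k) \<ge> 1 * cfQ \<alpha> (Suc k)"
      using a_ge1[of k] Suc.IH by (intro mult_right_mono) auto
    then have "cfQ \<alpha> (Suc (Suc k)) \<ge> cfQ \<alpha> (Suc k) + cfQ \<alpha> k" by simp
    moreover have "1 \<le> cfQ \<alpha> k" "int k \<le> cfQ \<alpha> (Suc k)" using Suc.IH \<open>k = Suc j\<close> by auto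
    ultimately show ?thesis by simp
  qed
  moreover have "0 \<le> cfQ \<alpha> (Suc k)" "1 \<le> cfQ \<alpha> (Suc k)" using Suc.IH by auto
  ultimately show ?case using q2 q3 by (intro conjI; linarith)
qed

lemma det: "cfP \<alpha> (Suc k) * cfQ \<alpha> k - cfP \<alpha> k * cfQ \<alpha> (Suc k) = (-1)^(Suc k)"
proof (induction k)
  case 0 then show ?case by simp
next
  case (Suc k)
  then show ?case by (simp add: algebra_simps)
qed

lemma key: "\<alpha> * (cfQ \<alpha> (Suc k) + cfQ \<alpha> k * cf_rem \<alpha> k) = cfP \<alpha> (Suc k) + cfP \<alpha> k * cf_rem \<alpha> k"
proof (induction k)
  case 0 then show ?case by simp
next
  case (Suc k)
  define a where "a = real_of_int (cf_a \<alpha> (Suc k))"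
  define s where "s = cf_rem \<alpha> (Suc k)"
  have s: "0 < s" unfolding s_def using rem_props[of "Suc k"] by blast
  have a: "a \<ge> 1" using a_ge1 a_def by simp
  have h: "1 / cf_rem \<alpha> k = a + s" using rem_Suc[of k] a_def s_def by simp
  have rk: "cf_rem \<alpha> k = 1 / (a + s)" by (simp add: h[symmetric])
  have as: "a + s > 0" using a s by linarith
  have IH: "\<alpha> * (cfQ \<alpha> (Suc k) + cfQ \<alpha> k / (a + s)) = cfP \<alpha> (Suc k) + cfP \<alpha> k / (a + s)"
    using Suc.IH rk by simp
  then have "\<alpha> * (cfQ \<alpha> (Suc k) * (a + s) + cfQ \<alpha> k) = cfP \<alpha> (Suc k) * (a + s) + cfP \<alpha> k"
    using as by (simp add: field_simps)
  then show ?case unfolding s_def[symmetric] by (simp add: a_def algebra_simps)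
qed


lemma erel: "\<alpha> * cfQ \<alpha> (Suc k) - cfP \<alpha> (Suc k) = - cf_rem \<alpha> k * (\<alpha> * cfQ \<alpha> k - cfP \<alpha> k)"
  using key[of k] by (simp add: algebra_simps)

lemma esign: "(-1)^k * (\<alpha> * cfQ \<alpha> (Suc k) - cfP \<alpha> (Suc k)) > 0"
proof (induction k)
  case 0 then show ?case using a0 by simp
next
  case (Suc k)
  have "(-1)^(Suc k) * (\<alpha> * cfQ \<alpha> (Suc (Suc k)) - cfP \<alpha> (Suc (Suc k)))
     = cf_rem \<alpha> (Suc k) * ((-1)^k * (\<alpha> * cfQ \<alpha> (Suc k) - cfP \<alpha> (Suc k)))"
    using erel[of "Suc k"] by (simp only: power_Suc) (simp add: algebra_simps)
  also have "\<dots> > 0" using Suc.IH rem_props[of "Suc k"] by simp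
  finally show ?case .
qed

lemma ebound: "\<bar>\<alpha> * cfQ \<alpha> (Suc k) - cfP \<alpha> (Suc k)\<bar> * cfQ \<alpha> (Suc (Suc k)) \<le> 1"
proof -
  define E where "E = \<alpha> * cfQ \<alpha> (Suc k) - cfP \<alpha> (Suc k)"
  define r where "r = cf_rem \<alpha> (Suc k)"
  have r: "0 < r" using rem_props r_def by blast
  have E2: "\<alpha> * cfQ \<alpha> (Suc (Suc k)) - cfP \<alpha> (Suc (Suc k)) = - r * E"
    using erel[of "Suc k"] unfolding E_def r_def by simp
  have d: "real_of_int (cfP \<alpha> (Suc (Suc k)) * cfQ \<alpha> (Suc k) - cfP \<alpha> (Suc k) * cfQ \<alpha> (Suc (Suc k))) = (-1)^(Suc (Suc k))"
    using det[of "Suc k"] by simp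
  have "E * cfQ \<alpha> (Suc (Suc k)) - (\<alpha> * cfQ \<alpha> (Suc (Suc k)) - cfP \<alpha> (Suc (Suc k))) * cfQ \<alpha> (Suc k)
      = real_of_int (cfP \<alpha> (Suc (Suc k)) * cfQ \<alpha> (Suc k) - cfP \<alpha> (Suc k) * cfQ \<alpha> (Suc (Suc k)))"
    unfolding E_def by (simp add: algebra_simps del: cfQ.simps cfP.simps)
  then have "E * cfQ \<alpha> (Suc (Suc k)) - (- r * E) * cfQ \<alpha> (Suc k)
      = real_of_int (cfP \<alpha> (Suc (Suc k)) * cfQ \<alpha> (Suc k) - cfP \<alpha> (Suc k) * cfQ \<alpha> (Suc (Suc k)))"
    unfolding E2 .
  then have "\<bar>E * (cfQ \<alpha> (Suc (Suc k)) + r * cfQ \<alpha> (Suc k))\<bar> = 1"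
    using d by (simp add: algebra_simps)
  then have h: "\<bar>E\<bar> * (cfQ \<alpha> (Suc (Suc k)) + r * cfQ \<alpha> (Suc k)) = 1"
  proof -
    have "0 \<le> real_of_int (cfQ \<alpha> (Suc (Suc k))) + r * cfQ \<alpha> (Suc k)"
      using Q_props[of k] Q_props[of "Suc k"] r by (simp del: cfQ.simps)
    then show ?thesis using \<open>\<bar>E * (cfQ \<alpha> (Suc (Suc k)) + r * cfQ \<alpha> (Suc k))\<bar> = 1\<close>
      by (simp add: abs_mult del: cfQ.simps)
  qed
  have "\<bar>E\<bar> * (r * cfQ \<alpha> (Suc k)) \<ge> 0" using Q_props[of k] r by simp
  then show ?thesis using h unfolding E_def by (simp add: algebra_simps)
qed

lemma cq_pos: "conv_q \<alpha> n \<ge> 1" using Q_props[of n] by (simp add: conv_q_def)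
lemma cq_ge: "conv_q \<alpha> n \<ge> int n" using Q_props[of n] by (simp add: conv_q_def)
lemma cq_mono: "conv_q \<alpha> n \<le> conv_q \<alpha> (Suc n)" using Q_props[of n] by (simp add: conv_q_def)
lemma cdet: "conv_p \<alpha> (Suc n) * conv_q \<alpha> n - conv_p \<alpha> n * conv_q \<alpha> (Suc n) = (-1)^n"
  using det[of "Suc n"] by (simp add: conv_q_def conv_p_def)
lemma csign: "(-1)^n * (\<alpha> * conv_q \<alpha> n - conv_p \<alpha> n) > 0"
  using esign[of n] by (simp add: conv_q_def conv_p_def)
lemma cbound: "\<bar>\<alpha> * conv_q \<alpha> n - conv_p \<alpha> n\<bar> * conv_q \<alpha> (Suc n) \<le> 1"
  using ebound[of n] by (simp add: conv_q_def conv_p_def del: cfQ.simps cfP.simps)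

lemma csign_even: "even n \<Longrightarrow> \<alpha> * conv_q \<alpha> n - conv_p \<alpha> n > 0"
  using csign[of n] by simp
lemma csign_odd: "odd n \<Longrightarrow> \<alpha> * conv_q \<alpha> n - conv_p \<alpha> n < 0"
  using csign[of n] by simp

end


lemma dist_int_le: "dist_int x \<le> \<bar>x - of_int p\<bar>"
  unfolding dist_int_def by (rule cINF_lower) (auto intro: bdd_belowI[of _ 0])

lemma dist_int_lt: assumes "dist_int x < c" shows "\<exists>p. \<bar>x - of_int p\<bar> < c"
  using assms unfolding dist_int_def by (subst (asm) cINF_less_iff) (auto intro: bdd_belowI[of _ 0])

lemma powr_Suc': "(x::real) > 0 \<Longrightarrow> x powr (t + 1) = x * x powr t"
  by (simp add: powr_add)

lemma absdiv: fixes q z :: real assumes qp: "q > 0" shows "\<bar>z - of_int p / q\<bar> = \<bar>q * z - of_int p\<bar> / q"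
proof -
  have "z - of_int p / q = (q*z - of_int p)/q" using qp by (simp add: field_simps)
  then show ?thesis using qp by simp
qed

lemma powdiv: fixes q :: real assumes qp: "q > 0" shows "\<gamma> / q powr (\<tau>+1) = (\<gamma> / q powr \<tau>) / q"
    using qp by (simp add: powr_Suc')

lemma D_dio:
  assumes "\<alpha> \<in> Dset \<gamma> \<tau>" "q \<ge> 1"
  shows "\<gamma> / real q powr \<tau> \<le> \<bar>real q * \<alpha> - of_int p\<bar>"
proof -
  have "dist_int (real q * \<alpha>) \<ge> \<gamma> / real q powr \<tau>" using assms unfolding Dset_def by blast
  then show ?thesis using dist_int_le[of "real q * \<alpha>" p] by linarith
qed

lemma D_dio':
  assumes "\<alpha> \<in> Dset \<gamma> \<tau>" "q \<ge> 1"
  shows "\<gamma> / real q powr (\<tau>+1) \<le> \<bar>\<alpha> - of_int p / real q\<bar>"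
proof -
  have q: "real q > 0" using assms by simp
  have "\<gamma> / real q powr \<tau> / real q \<le> \<bar>real q * \<alpha> - of_int p\<bar> / real q"
    by (rule divide_right_mono) (use D_dio[OF assms, of p] q in auto)
  then show ?thesis unfolding absdiv[OF q] powdiv[OF q] .
qed

lemma D_basic:
  assumes "\<alpha> \<in> Dset \<gamma> \<tau>" "\<gamma> > 0"
  shows "0 < \<alpha>" "\<alpha> < 1" "\<alpha> \<notin> \<rat>" "\<gamma> \<le> \<alpha>"
proof -
  show "0 < \<alpha>" "\<alpha> < 1" using assms unfolding Dset_def by auto
  have "\<gamma> / real 1 powr \<tau> \<le> \<bar>real 1 * \<alpha> - of_int 0\<bar>" by (rule D_dio[OF assms(1)]) auto
  then show "\<gamma> \<le> \<alpha>" using \<open>0 < \<alpha>\<close> by simp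
  show "\<alpha> \<notin> \<rat>"
  proof
    assume "\<alpha> \<in> \<rat>"
    then obtain a b where ab: "b > 0" "\<alpha> = of_int a / of_int b" by (rule Rats_cases') 
    have "\<gamma> / real (nat b) powr \<tau> \<le> \<bar>real (nat b) * \<alpha> - of_int a\<bar>"
      by (rule D_dio[OF assms(1)]) (use ab in auto)
    moreover have "real (nat b) * \<alpha> = of_int a" using ab by simp
    moreover have "\<gamma> / real (nat b) powr \<tau> > 0" using ab assms by simp
    ultimately show False by simp
  qed
qed

lemma notD:
  assumes "0 < z" "z < 1" "z \<notin> Dset \<gamma> \<tau>"
  shows "\<exists>q::nat. \<exists>p::int. q \<ge> 1 \<and> \<bar>z - of_int p / real q\<bar> < \<gamma> / real q powr (\<tau>+1)"
proof -
  have "\<not> (\<forall>q::nat. q \<ge> 1 \<longrightarrow> dist_int (real q * z) \<ge> \<gamma> / real q powr \<tau>)"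
    using assms unfolding Dset_def by blast
  then obtain q :: nat where q: "q \<ge> 1" "dist_int (real q * z) < \<gamma> / real q powr \<tau>"
    by (auto simp: not_le)
  obtain p where p: "\<bar>real q * z - of_int p\<bar> < \<gamma> / real q powr \<tau>" using dist_int_lt[OF q(2)] by blast
  have qp: "real q > 0" using q by simp
  have "\<bar>real q * z - of_int p\<bar> / real q < \<gamma> / real q powr \<tau> / real q"
    by (rule divide_strict_right_mono) (use p qp in auto)
  then have "\<bar>z - of_int p / real q\<bar> < \<gamma> / real q powr (\<tau>+1)" unfolding absdiv[OF qp] powdiv[OF qp] .
  then show ?thesis using q by blast
qed


lemma bracket:
  fixes p q P0 Q0 P1 Q1 :: int
  assumes "P1 * Q0 - P0 * Q1 = 1" "p * Q0 - P0 * q \<ge> 1" "P1 * q - p * Q1 \<ge> 1" "Q0 \<ge> 0" "Q1 \<ge> 0"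
  shows "q \<ge> Q0 + Q1"
proof -
  have "q = Q1 * (p * Q0 - P0 * q) + Q0 * (P1 * q - p * Q1)"
  proof -
    have "Q1 * (p * Q0 - P0 * q) + Q0 * (P1 * q - p * Q1) = q * (P1 * Q0 - P0 * Q1)" by (simp add: algebra_simps)
    then show ?thesis using assms(1) by simp
  qed
  moreover have "Q1 * (p * Q0 - P0 * q) \<ge> Q1 * 1" using assms by (intro mult_left_mono) auto
  moreover have "Q0 * (P1 * q - p * Q1) \<ge> Q0 * 1" using assms by (intro mult_left_mono) auto
  ultimately show ?thesis by linarith
qed

lemma divq:
  fixes p q P0 Q0 P1 Q1 :: int
  assumes "\<bar>P1 * Q0 - P0 * Q1\<bar> = 1" "p * Q0 = P0 * q" "q > 0" "Q0 > 0"
  shows "q \<ge> Q0"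
proof -
  define X where "X = P1 * q - p * Q1"
  have e: "q * (P1 * Q0 - P0 * Q1) = Q0 * X"
    using assms(2) unfolding X_def by (simp add: algebra_simps)
  have "q = \<bar>q * (P1 * Q0 - P0 * Q1)\<bar>" using assms(1,3) by (simp add: abs_mult)
  then have qa: "q = Q0 * \<bar>X\<bar>" using e assms(4) by (simp add: abs_mult)
  then have "X \<noteq> 0" using assms(3) by auto
  then have "\<bar>X\<bar> \<ge> 1" by simp
  then have "Q0 * \<bar>X\<bar> \<ge> Q0 * 1" using assms(4) by (intro mult_left_mono) auto
  then show ?thesis using qa by simp
qed

lemma cover_len:
  fixes a b :: real and c d :: "'i \<Rightarrow> real"
  assumes "finite F" "a \<le> b" "{a..b} \<subseteq> (\<Union>i\<in>F. {c i - d i <..< c i + d i})" "\<And>i. i \<in> F \<Longrightarrow> d i \<ge> 0"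
  shows "b - a \<le> (\<Sum>i\<in>F. 2 * d i)"
proof -
  have "ennreal (b - a) = emeasure lborel {a..b}" using assms by simp
  also have "\<dots> \<le> emeasure lborel (\<Union>i\<in>F. {c i - d i <..< c i + d i})"
  proof (rule emeasure_mono[OF assms(3)])
    have "open (\<Union>i\<in>F. {c i - d i <..< c i + d i})" by auto
    then show "(\<Union>i\<in>F. {c i - d i <..< c i + d i}) \<in> sets lborel" by simp
  qed
  also have "\<dots> \<le> (\<Sum>i\<in>F. emeasure lborel {c i - d i <..< c i + d i})"
    by (rule emeasure_subadditive_finite[OF assms(1)]) auto
  also have "\<dots> = (\<Sum>i\<in>F. ennreal (2 * d i))"
    by (rule sum.cong) (use assms(4) in auto)
  also have "\<dots> = ennreal (\<Sum>i\<in>F. 2 * d i)"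
    by (rule sum_ennreal) (use assms(4) in auto)
  finally have "ennreal (b - a) \<le> ennreal (\<Sum>i\<in>F. 2 * d i)" .
  moreover have "(\<Sum>i\<in>F. 2 * d i) \<ge> 0" using assms(4) by (intro sum_nonneg) auto
  ultimately show ?thesis by (simp add: ennreal_le_iff)
qed

lemma tele: "M \<ge> 1 \<Longrightarrow> (\<Sum>q\<in>{2..M}. 1 / (real q * (real q - 1))) = 1 - 1 / real M"
proof (induction M)
  case 0 then show ?case by simp
next
  case (Suc n)
  show ?case
  proof (cases "n = 0")
    case True then show ?thesis by simp
  next
    case False
    have "{2..Suc n} = insert (Suc n) {2..n}" using False by auto
    then have "(\<Sum>q\<in>{2..Suc n}. 1 / (real q * (real q - 1))) = 1 / (real (Suc n) * real n) + (1 - 1 / real n)"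
      using Suc False by simp
    also have "\<dots> = 1 - 1 / real (Suc n)"
    proof -
      have "real n > 0" using False by simp
      moreover have "real n + real n * real n > 0" using \<open>real n > 0\<close> by (simp add: add_pos_pos)
      ultimately show ?thesis by (simp add: field_simps)
    qed
    finally show ?thesis .
  qed
qed


lemma powr_ge_pow: "(x::real) \<ge> 1 \<Longrightarrow> s \<ge> real k \<Longrightarrow> x powr s \<ge> x ^ k"
proof -
  assume "x \<ge> 1" "s \<ge> real k"
  then have "x powr real k \<le> x powr s" by (intro powr_mono) auto
  moreover have "x powr real k = x ^ k" using \<open>x \<ge> 1\<close> by (simp add: powr_realpow)
  ultimately show ?thesis by simp
qed

lemma pow_le_pow: "(x::real) \<ge> 1 \<Longrightarrow> k \<le> n \<Longrightarrow> x ^ k \<le> x ^ n"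
  by (rule power_increasing)

lemma lt_int1:
  fixes a b p :: int and q :: nat
  assumes "b > 0" "q > 0" "of_int a / of_int b < of_int p / real q"
  shows "a * int q < p * b"
proof -
  have "of_int a * real q < of_int p * of_int b" using assms by (simp add: field_simps)
  then have "real_of_int (a * int q) < real_of_int (p * b)" by simp
  then show ?thesis by linarith
qed

lemma lt_int2:
  fixes a b p :: int and q :: nat
  assumes "b > 0" "q > 0" "of_int p / real q < of_int a / of_int b"
  shows "p * b < a * int q"
proof -
  have "of_int p * of_int b < of_int a * real q" using assms by (simp add: field_simps)
  then have "real_of_int (p * b) < real_of_int (a * int q)" by simp
  then show ?thesis by linarith
qed

lemma cube16: "(x::real) \<ge> 4 \<Longrightarrow> x ^ 3 \<ge> 16 * x"
proof -
  assume x: "x \<ge> 4"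
  have "x^2 \<ge> 4^2" using x by (intro power_mono) auto
  then have "x * x^2 \<ge> x * 16" using x by (intro mult_left_mono) auto
  then show ?thesis by (simp add: power3_eq_cube power2_eq_square algebra_simps)
qed

lemma half_div: "(a::real) / (2 * x) = a / x / 2" by simp

lemma lin1: "(e::real) < b \<Longrightarrow> b = a/2 \<Longrightarrow> a < w + e \<Longrightarrow> a - b < w" by linarith
lemma lin2: "(c::real) \<le> a \<Longrightarrow> a < w + e \<Longrightarrow> w \<le> h \<Longrightarrow> e \<le> E \<Longrightarrow> c - h < E" by linarith

lemma fl: "(b::real) > 0 \<Longrightarrow> d > 0 \<Longrightarrow> a / b < c / d \<Longrightarrow> a * d < c * b"
  by (simp add: field_simps)

lemma HA:
  fixes x g t :: real
  assumes "x \<ge> 8" "t \<ge> 3" "0 < g" "g < 1"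
  shows "8 * g * (x^2 * (x - 1)) \<le> x powr (t + 1)"
proof -
  have "x powr (t+1) \<ge> x ^ 4" using assms by (intro powr_ge_pow) auto
  moreover have "8 * g * (x^2 * (x - 1)) \<le> 8 * (x^2 * x)"
  proof -
    have "x^2 * (x - 1) \<le> x^2 * x" using assms by (intro mult_left_mono) auto
    moreover have "x^2 * (x-1) \<ge> 0" using assms by simp
    moreover have "g * (x^2 * (x - 1)) \<le> 1 * (x^2 * (x - 1))" using assms \<open>x^2 * (x-1) \<ge> 0\<close>
      by (intro mult_right_mono) auto
    ultimately show ?thesis by simp
  qed
  moreover have "8 * (x^2 * x) \<le> x * (x^2 * x)" using assms by (intro mult_right_mono) auto
  ultimately show ?thesis by (simp add: power_numeral_reduce algebra_simps)
qed

lemma HB: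
  fixes x y t :: real
  assumes "x \<ge> 12 * y" "y \<ge> 1" "t \<ge> 2"
  shows "12 * (x * (x - 1)) * y powr (t - 1) \<le> x powr (t + 1)"
proof -
  have x1: "x \<ge> 1" using assms by linarith
  have "x powr (t+1) = x powr (2 + (t - 1))" by (rule arg_cong[where f="\<lambda>s. x powr s"]) simp
  also have "\<dots> = x powr 2 * x powr (t - 1)" by (rule powr_add)
  also have "\<dots> = x^2 * x powr (t - 1)" using x1 by (simp add: powr_realpow)
  finally have e: "x powr (t+1) = x^2 * x powr (t - 1)" .
  have "x powr (t - 1) \<ge> (12 * y) powr (t - 1)" using assms by (intro powr_mono2) auto
  also have "(12 * y) powr (t - 1) = 12 powr (t - 1) * y powr (t - 1)" using assms by (simp add: powr_mult)
  also have "12 powr (t - 1) \<ge> 12" using powr_ge_pow[where x=12 and s="t-1" and k=1] assms by simp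
  then have "12 powr (t - 1) * y powr (t - 1) \<ge> 12 * y powr (t - 1)" by (intro mult_right_mono) auto
  finally have p: "x powr (t - 1) \<ge> 12 * y powr (t - 1)" .
  have "12 * (x * (x - 1)) * y powr (t - 1) \<le> x^2 * (12 * y powr (t - 1))"
  proof -
    have "x * (x - 1) \<le> x^2" using x1 by (simp add: power2_eq_square algebra_simps)
    then have "(x * (x - 1)) * (12 * y powr (t - 1)) \<le> x^2 * (12 * y powr (t - 1))"
      by (intro mult_right_mono) auto
    then show ?thesis by (simp add: algebra_simps)
  qed
  also have "\<dots> \<le> x^2 * x powr (t - 1)" using p by (intro mult_left_mono) auto
  finally show ?thesis using e by simp
qed

lemma fc: "real_of_int (\<lfloor>b\<rfloor> - \<lceil>a\<rceil> + 1) \<le> b - a + 1"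
  using of_int_floor_le[of b] le_of_int_ceiling[of a] by linarith

lemma lin3: "(c::real) - b \<le> (c - b) / 2 \<Longrightarrow> b < c \<Longrightarrow> False" by (simp add: field_simps)

lemma int_gap: "(a::int) < b \<Longrightarrow> a + 1 \<le> b" by simp

lemma frac_less_iff:
  fixes a c :: int and b d :: real
  assumes "b > 0" "d > 0"
  shows "(a / b < c / d) \<longleftrightarrow> a * d < c * b"
  using assms by (simp add: divide_less_eq less_divide_eq field_simps)

context
  fixes \<gamma> \<tau> \<alpha> e :: real and m :: nat
  assumes tau: "\<tau> > 3" and gpos: "\<gamma> > 0" and aD: "\<alpha> \<in> Dset \<gamma> \<tau>" and epos: "e > 0" and ea: "e \<le> \<alpha>"
    and iso: "\<forall>y\<in>Dset \<gamma> \<tau>. \<bar>y - \<alpha>\<bar> < e \<longrightarrow> y = \<alpha>"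
    and meven: "even m" and m4: "m \<ge> 4"
    and L1: "4 / (real_of_int (conv_q \<alpha> m))^2 < e"
    and L2: "real_of_int (conv_q \<alpha> m) powr (\<tau> - 3) \<ge> 72"
begin

abbreviation "qm \<equiv> real_of_int (conv_q \<alpha> m)"
abbreviation "pm \<equiv> real_of_int (conv_p \<alpha> m)"
abbreviation "XX \<equiv> pm / qm - \<gamma> / qm powr (\<tau> + 1) - 2 * \<gamma> / qm powr (\<tau> - 1)"
abbreviation "YY \<equiv> pm / qm - \<gamma> / qm powr (\<tau> + 1)"
abbreviation "Q0 \<equiv> qm powr (\<tau> - 1) / (6 * \<gamma> * qm)"

lemma a0: "0 < \<alpha>" and a1: "\<alpha> < 1" and irr: "\<alpha> \<notin> \<rat>" and ga: "\<gamma> \<le> \<alpha>"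
  using D_basic[OF aD gpos] by auto

lemma g1: "\<gamma> < 1" using ga a1 by simp

lemmas cq_pos' = cq_pos[OF a0 a1 irr] and cq_ge' = cq_ge[OF a0 a1 irr] and cq_mono' = cq_mono[OF a0 a1 irr]
  and cdet' = cdet[OF a0 a1 irr] and csign_even' = csign_even[OF a0 a1 irr]
  and csign_odd' = csign_odd[OF a0 a1 irr] and cbound' = cbound[OF a0 a1 irr]

lemma qm4: "qm \<ge> 4" using cq_ge'[of m] m4 by simp

lemma qm_big: "qm powr (\<tau> - 1) \<ge> 72 * qm^2"
proof -
  have "qm powr (\<tau> - 1) = qm powr ((\<tau> - 3) + 2)" by simp
  also have "\<dots> = qm powr (\<tau> - 3) * qm powr 2" by (rule powr_add)
  also have "qm powr 2 = qm^2" using qm4 by (simp add: powr_realpow)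
  finally show ?thesis using L2 qm4 by (simp add: mult_right_mono)
qed

lemma pm_lt: "pm / qm < \<alpha>"
  using csign_even'[OF meven] qm4 by (simp add: divide_less_eq algebra_simps)

lemma pm_close: "\<alpha> - pm / qm \<le> 1 / qm^2"
proof -
  have b: "(\<alpha> * qm - pm) * real_of_int (conv_q \<alpha> (Suc m)) \<le> 1"
    using cbound'[of m] csign_even'[OF meven] by simp
  have "qm \<le> real_of_int (conv_q \<alpha> (Suc m))" using cq_mono'[of m] by simp
  then have "(\<alpha> * qm - pm) * qm \<le> 1"
    using b csign_even'[OF meven] by (smt (verit) mult_left_mono)
  then have "\<alpha> * qm - pm \<le> 1 / qm" using qm4 by (simp add: pos_le_divide_eq)
  then have "(\<alpha> * qm - pm) / qm \<le> (1 / qm) / qm" using qm4 by (intro divide_right_mono) auto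
  moreover have "\<alpha> - pm / qm = (\<alpha> * qm - pm) / qm" using qm4 by (simp add: field_simps)
  ultimately show ?thesis by (simp add: power2_eq_square)
qed


lemma eps_le: "pm / qm - XX \<le> 3 * \<gamma> / qm powr (\<tau> - 1)"
proof -
  have "qm powr (\<tau> - 1) \<le> qm powr (\<tau> + 1)" using qm4 by (intro powr_mono) auto
  moreover have "qm powr (\<tau> - 1) > 0" using qm4 by simp
  ultimately have "\<gamma> / qm powr (\<tau> + 1) \<le> \<gamma> / qm powr (\<tau> - 1)"
    using gpos by (intro divide_left_mono) auto
  then show ?thesis by simp
qed

lemma eps_small: "3 * \<gamma> / qm powr (\<tau> - 1) < 1 / (2 * qm^2)"
proof -
  have p: "qm powr (\<tau> - 1) > 0" using qm4 by simp
  have "3 * \<gamma> * (2 * qm^2) < 1 * (72 * qm^2)" using g1 gpos qm4 by simp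
  also have "\<dots> \<le> qm powr (\<tau> - 1)" using qm_big by simp
  finally show ?thesis using p qm4 by (simp add: divide_less_eq less_divide_eq field_simps)
qed

lemma eps_pos: "pm / qm - XX > 0"
proof -
  have "\<gamma> / qm powr (\<tau> + 1) > 0" "2 * \<gamma> / qm powr (\<tau> - 1) > 0" using gpos qm4 by auto
  then show ?thesis by simp
qed

lemma X_gt: "XX > \<alpha> - e"
proof -
  have "\<alpha> - XX = (\<alpha> - pm / qm) + (pm / qm - XX)" by simp
  also have "\<dots> < 1 / qm^2 + 1 / (2 * qm^2)" using pm_close eps_le eps_small by linarith
  also have "\<dots> \<le> 4 / qm^2" using qm4 by (simp add: field_simps)
  finally show ?thesis using L1 by linarith
qed

lemma X_pos: "XX > 0" using X_gt ea by linarith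
lemma XY: "XX < YY" using gpos qm4 by simp
lemma Y_lt: "YY < pm / qm" using gpos qm4 by simp


lemma A1:
  assumes "z < \<alpha>" "q \<ge> 1" "\<bar>z - of_int p / real q\<bar> < \<gamma> / real q powr (\<tau>+1)"
  shows "of_int p / real q < \<alpha>"
proof (rule ccontr)
  assume "\<not> of_int p / real q < \<alpha>"
  moreover have "\<gamma> / real q powr (\<tau>+1) \<le> \<bar>\<alpha> - of_int p / real q\<bar>" by (rule D_dio'[OF aD assms(2)])
  ultimately show False using assms(1,3) by linarith
qed

lemma A2:
  assumes "z \<le> YY" "q \<ge> 1" "\<bar>z - of_int p / real q\<bar> < \<gamma> / real q powr (\<tau>+1)" "of_int p / real q < \<alpha>"
  shows "\<not> pm / qm < of_int p / real q"
proof
  assume lt: "pm / qm < of_int p / real q"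
  define j where "j = p * conv_q \<alpha> m - conv_p \<alpha> m * int q"
  have qq: "real q > 0" using assms by simp
  have dj: "of_int p / real q - pm / qm = of_int j / (real q * qm)"
    unfolding j_def using qq qm4 by (simp add: field_simps)
  have "of_int j / (real q * qm) > 0" using lt dj by simp
  moreover have "real q * qm > 0" using qq qm4 by simp
  ultimately have "j > 0" by (auto simp: zero_less_divide_iff)
  then have j1: "of_int j \<ge> (1::real)" by simp
  have ge: "of_int p / real q - pm / qm \<ge> 1 / (real q * qm)"
    unfolding dj using j1 qq qm4 by (intro divide_right_mono) auto
  show False
  proof (cases "real q \<le> qm")
    case True
    have "1 / (real q * qm) \<ge> 1 / (qm * qm)" using True qq qm4 by (intro divide_left_mono mult_right_mono) auto
    then have "1 / (real q * qm) \<ge> 1 / qm^2" by (simp add: power2_eq_square)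
    then show False using ge pm_close assms(4) by linarith
  next
    case False
    have "real q powr \<tau> \<ge> real q ^ 3" using qq assms(2) tau by (intro powr_ge_pow) auto
    moreover have "real q ^ 3 \<ge> real q" using pow_le_pow[of "real q" 1 3] assms(2) by simp
    ultimately have "\<gamma> * qm < real q powr \<tau>" using False g1 qm4 gpos
      by (smt (verit) mult_less_cancel_right2)
    then have "\<gamma> / (real q * real q powr \<tau>) < 1 / (real q * qm)"
      using qq qm4 gpos by (simp add: field_simps)
    then have "\<gamma> / real q powr (\<tau>+1) < 1 / (real q * qm)" by (simp only: powr_Suc'[OF qq])
    then have "of_int p / real q - \<gamma> / real q powr (\<tau>+1) > pm / qm" using ge by linarith
    then show False using assms(1,3) Y_lt by linarith
  qed
qed

lemma A3:
  assumes "z \<le> YY" "q \<ge> 1" "\<bar>z - of_int p / real q\<bar> < \<gamma> / real q powr (\<tau>+1)"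
  shows "of_int p / real q \<noteq> pm / qm"
proof
  assume eq: "of_int p / real q = pm / qm"
  have qq: "real q > 0" using assms by simp
  have "real_of_int (p * conv_q \<alpha> m) = real_of_int (conv_p \<alpha> m * int q)"
    using eq qq qm4 by (simp add: field_simps)
  then have e: "p * conv_q \<alpha> m = conv_p \<alpha> m * int q" by linarith
  have d: "\<bar>conv_p \<alpha> (Suc m) * conv_q \<alpha> m - conv_p \<alpha> m * conv_q \<alpha> (Suc m)\<bar> = 1"
    using cdet'[of m] by simp
  have "int q \<ge> conv_q \<alpha> m" by (rule divq[OF d e]) (use assms qm4 in auto)
  then have qge: "real q \<ge> qm" by linarith
  have "qm powr (\<tau>+1) \<le> real q powr (\<tau>+1)" using qge qm4 tau by (intro powr_mono2) auto
  moreover have "real q powr (\<tau>+1) > 0" "qm powr (\<tau>+1) > 0" using qq qm4 by auto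
  ultimately have "\<gamma> / real q powr (\<tau>+1) \<le> \<gamma> / qm powr (\<tau>+1)" using gpos
    by (intro divide_left_mono) (auto intro: mult_pos_pos)
  then show False using assms(1,3) eq by linarith
qed


lemma dio_conv: "\<gamma> * real_of_int (conv_q \<alpha> (Suc n)) \<le> real_of_int (conv_q \<alpha> n) powr \<tau>"
proof -
  define Q where "Q = real_of_int (conv_q \<alpha> n)"
  have Q1: "Q \<ge> 1" using cq_pos'[of n] Q_def by simp
  have nQ: "real (nat (conv_q \<alpha> n)) = Q" using cq_pos'[of n] Q_def by simp
  have "\<gamma> / real (nat (conv_q \<alpha> n)) powr \<tau> \<le> \<bar>real (nat (conv_q \<alpha> n)) * \<alpha> - of_int (conv_p \<alpha> n)\<bar>"
    by (rule D_dio[OF aD]) (use cq_pos'[of n] in auto)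
  then have a: "\<gamma> / Q powr \<tau> \<le> \<bar>\<alpha> * Q - of_int (conv_p \<alpha> n)\<bar>" unfolding nQ by (simp add: mult.commute)
  have b: "\<bar>\<alpha> * Q - of_int (conv_p \<alpha> n)\<bar> * real_of_int (conv_q \<alpha> (Suc n)) \<le> 1"
    using cbound'[of n] Q_def by simp
  have qs: "real_of_int (conv_q \<alpha> (Suc n)) > 0" using cq_pos'[of "Suc n"] by simp
  have "\<gamma> / Q powr \<tau> * real_of_int (conv_q \<alpha> (Suc n)) \<le> 1"
    using a b qs by (smt (verit) mult_right_mono)
  then show ?thesis using Q1 unfolding Q_def by (simp add: field_simps)
qed

context
  fixes z :: real and p :: int and q :: nat
  assumes zX: "XX \<le> z" and zY: "z \<le> YY" and q1: "q \<ge> 1"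
    and H: "\<bar>z - of_int p / real q\<bar> < \<gamma> / real q powr (\<tau>+1)"
    and lt: "of_int p / real q < pm / qm"
begin

lemma qq: "real q > 0" using q1 by simp

lemma j_ge1: "conv_p \<alpha> m * int q - p * conv_q \<alpha> m \<ge> 1"
  using lt_int2[of "conv_q \<alpha> m" q p "conv_p \<alpha> m"] lt qm4 q1 by simp

lemma Kineq: "of_int (conv_p \<alpha> m * int q - p * conv_q \<alpha> m) / (real q * qm)
    < \<gamma> / real q powr (\<tau>+1) + (pm / qm - XX)"
proof -
  have "of_int (conv_p \<alpha> m * int q - p * conv_q \<alpha> m) / (real q * qm) = pm / qm - of_int p / real q"
    using qq qm4 by (simp add: field_simps)
  then show ?thesis using H zX by linarith
qed

lemma A4a: assumes "real q \<ge> qm" shows "real q > Q0"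
proof -
  have qge4: "real q \<ge> 4" using assms qm4 by linarith
  have "real q powr \<tau> \<ge> real q ^ 3" using qq q1 tau by (intro powr_ge_pow) auto
  then have "real q powr \<tau> \<ge> 16 * real q" using cube16[OF qge4] by linarith
  moreover have "\<gamma> * qm \<le> 1 * qm" using g1 qm4 by (intro mult_right_mono) auto
  ultimately have "2 * \<gamma> * qm \<le> real q powr \<tau>" using assms by linarith
  then have "\<gamma> / (real q * real q powr \<tau>) \<le> 1 / (2 * (real q * qm))"
    using qq qm4 gpos by (simp add: field_simps)
  then have w: "\<gamma> / real q powr (\<tau>+1) \<le> 1 / (2 * (real q * qm))" by (simp only: powr_Suc'[OF qq])
  have "1 \<le> real_of_int (conv_p \<alpha> m * int q - p * conv_q \<alpha> m)" using j_ge1 by (metis of_int_1_le_iff)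
  then have "1 / (real q * qm) \<le> of_int (conv_p \<alpha> m * int q - p * conv_q \<alpha> m) / (real q * qm)"
    using qq qm4 by (intro divide_right_mono) auto
  then have "1 / (real q * qm) - 1 / (2 * (real q * qm)) < 3 * \<gamma> / qm powr (\<tau> - 1)"
    by (rule lin2[OF _ Kineq w eps_le])
  then have "1 / (2 * (real q * qm)) < 3 * \<gamma> / qm powr (\<tau> - 1)" by simp
  then show ?thesis using qq qm4 gpos by (simp add: field_simps)
qed

lemma s1: assumes "real q < qm"
  shows "of_int (conv_p \<alpha> m * int q - p * conv_q \<alpha> m) * real q powr \<tau> < 2 * \<gamma> * qm"
proof -
  define J where "J = real_of_int (conv_p \<alpha> m * int q - p * conv_q \<alpha> m)"
  have J1: "J \<ge> 1" unfolding J_def using j_ge1 by (metis of_int_1_le_iff)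
  have "1 / (2 * qm^2) \<le> 1 / (2 * (real q * qm))"
    using assms qq qm4 by (intro divide_left_mono) (auto simp: power2_eq_square)
  also have "\<dots> \<le> J / (2 * (real q * qm))" using J1 qq qm4 by (intro divide_right_mono) auto
  finally have "pm / qm - XX < J / (2 * (real q * qm))" using eps_le eps_small by linarith
  moreover have "J / (real q * qm) < \<gamma> / real q powr (\<tau>+1) + (pm / qm - XX)"
    using Kineq unfolding J_def .
  ultimately have "J / (real q * qm) - J / (2 * (real q * qm)) < \<gamma> / real q powr (\<tau>+1)"
    using lin1 half_div by blast
  then have "J / (2 * (real q * qm)) < \<gamma> / (real q * real q powr \<tau>)"
    by (simp add: powr_Suc'[OF qq])
  then have "J * (real q * real q powr \<tau>) < \<gamma> * (2 * (real q * qm))"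
    by (rule fl[rotated 2]) (use qq qm4 in auto)
  then have "real q * (J * real q powr \<tau>) < real q * (2 * \<gamma> * qm)" by (simp add: algebra_simps)
  then have "J * real q powr \<tau> < 2 * \<gamma> * qm" using qq by simp
  then show ?thesis unfolding J_def .
qed

lemma s2: "p \<ge> 0"
proof (rule ccontr)
  assume "\<not> p \<ge> 0"
  then have "of_int p \<le> (-1::real)" by simp
  then have "of_int p / real q \<le> -1 / real q" using qq by (intro divide_right_mono) auto
  moreover have "real q powr (\<tau>+1) \<ge> real q" using q1 tau powr_ge_pow[where x="real q" and s="\<tau>+1" and k=1] by simp
  then have "\<gamma> / real q powr (\<tau>+1) \<le> \<gamma> / real q" using qq gpos by (intro divide_left_mono) auto
  moreover have "\<gamma> / real q < 1 / real q" using g1 qq by (intro divide_strict_right_mono) auto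
  ultimately have "of_int p / real q + \<gamma> / real q powr (\<tau>+1) < 0" by simp
  then show False using H zX X_pos by linarith
qed


lemma rho_nonneg: "of_int p / real q \<ge> 0" using s2 qq by simp

lemma A4b:
  assumes nogood: "\<forall>n<m. even n \<longrightarrow> real_of_int (conv_p \<alpha> n) / real_of_int (conv_q \<alpha> n)
      + \<gamma> / real_of_int (conv_q \<alpha> n) powr (\<tau>+1) < XX"
    and small: "real q < qm"
  shows False
proof -
  define \<rho> where "\<rho> = of_int p / real q"
  define w where "w = \<gamma> / real q powr (\<tau>+1)"
  define cp where "cp n = real_of_int (conv_p \<alpha> n)" for n
  define cq where "cq n = real_of_int (conv_q \<alpha> n)" for n
  have cqpos: "cq n \<ge> 1" for n using cq_pos'[of n] cq_def by simp
  have wpos: "w > 0" unfolding w_def using gpos qq by simp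
  have Hz: "z < \<rho> + w" using H zX unfolding \<rho>_def w_def by linarith
  define S where "S = {n. even n \<and> n \<le> m - 2 \<and> cp n / cq n \<le> \<rho>}"
  have "0 \<in> S" unfolding S_def cp_def cq_def \<rho>_def using rho_nonneg by (simp add: conv_p_def conv_q_def)
  have finS: "finite S" unfolding S_def by (rule finite_subset[of _ "{..m-2}"]) auto
  define n where "n = Max S"
  have "n \<in> S" unfolding n_def using finS \<open>0 \<in> S\<close> by (intro Max_in) auto
  then have nev: "even n" and nm: "n \<le> m - 2" and nle: "cp n / cq n \<le> \<rho>" unfolding S_def by auto
  have nlt: "n < m" using nm m4 by linarith
  have n2: "n + 2 \<le> m" using nm m4 by linarith
  have nxt: "\<rho> < cp (n+2) / cq (n+2)"
  proof (cases "n + 2 = m")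
    case True then show ?thesis using lt unfolding \<rho>_def cp_def cq_def by simp
  next
    case False
    then have "n + 2 \<le> m - 2" using nev meven n2 by presburger
    show ?thesis
    proof (rule ccontr)
      assume "\<not> \<rho> < cp (n+2) / cq (n+2)"
      then have "n + 2 \<in> S" unfolding S_def using nev \<open>n + 2 \<le> m - 2\<close> by auto
      then have "n + 2 \<le> n" unfolding n_def using finS by (intro Max_ge) auto
      then show False by simp
    qed
  qed
  show False
  proof (cases "\<rho> = cp n / cq n")
    case True
    have e: "p * conv_q \<alpha> n = conv_p \<alpha> n * int q"
    proof -
      have "real_of_int (p * conv_q \<alpha> n) = real_of_int (conv_p \<alpha> n * int q)"
        using True qq cqpos[of n] unfolding \<rho>_def cp_def cq_def by (simp add: field_simps)
      then show ?thesis by linarith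
    qed
    have d: "\<bar>conv_p \<alpha> (Suc n) * conv_q \<alpha> n - conv_p \<alpha> n * conv_q \<alpha> (Suc n)\<bar> = 1"
      using cdet'[of n] by simp
    have "int q \<ge> conv_q \<alpha> n" by (rule divq[OF d e]) (use q1 cq_pos'[of n] in auto)
    then have qge: "real q \<ge> cq n" unfolding cq_def by linarith
    have "cq n powr (\<tau>+1) \<le> real q powr (\<tau>+1)" using qge cqpos[of n] tau by (intro powr_mono2) auto
    moreover have "real q powr (\<tau>+1) > 0" "cq n powr (\<tau>+1) > 0" using qq cqpos[of n] by auto
    ultimately have "w \<le> \<gamma> / cq n powr (\<tau>+1)" unfolding w_def using gpos
      by (intro divide_left_mono) (auto intro: mult_pos_pos)
    then have "cp n / cq n + \<gamma> / cq n powr (\<tau>+1) > XX" using True Hz zX by linarith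
    moreover have "cp n / cq n + \<gamma> / cq n powr (\<tau>+1) < XX" using nogood nlt nev unfolding cp_def cq_def by blast
    ultimately show False by linarith
  next
    case False
    then have gtn: "cp n / cq n < \<rho>" using nle by simp
    have "\<alpha> * cq (n+2) - cp (n+2) > 0" using csign_even'[of "n+2"] nev unfolding cp_def cq_def by simp
    then have a2: "cp (n+2) / cq (n+2) < \<alpha>" using cqpos[of "n+2"] by (simp add: divide_less_eq algebra_simps)
    have "\<alpha> * cq (Suc n) - cp (Suc n) < 0" using csign_odd'[of "Suc n"] nev unfolding cp_def cq_def by simp
    then have a1: "\<alpha> < cp (Suc n) / cq (Suc n)" using cqpos[of "Suc n"] by (simp add: less_divide_eq algebra_simps)
    have d1: "conv_p \<alpha> (Suc n) * conv_q \<alpha> n - conv_p \<alpha> n * conv_q \<alpha> (Suc n) = 1"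
      using cdet'[of n] nev by simp
    have b1: "p * conv_q \<alpha> n - conv_p \<alpha> n * int q \<ge> 1"
      using lt_int1[of "conv_q \<alpha> n" q "conv_p \<alpha> n" p] gtn cq_pos'[of n] q1 unfolding \<rho>_def cp_def cq_def by simp
    have b2: "conv_p \<alpha> (Suc n) * int q - p * conv_q \<alpha> (Suc n) \<ge> 1"
      using lt_int2[of "conv_q \<alpha> (Suc n)" q p "conv_p \<alpha> (Suc n)"] nxt a2 a1 cq_pos'[of "Suc n"] q1
      unfolding \<rho>_def cp_def cq_def by simp
    have "int q \<ge> conv_q \<alpha> n + conv_q \<alpha> (Suc n)"
      by (rule bracket[OF d1 b1 b2]) (use cq_pos'[of n] cq_pos'[of "Suc n"] in auto)
    then have qbig: "real q > cq (Suc n)" using cq_pos'[of n] unfolding cq_def by linarith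
    have powbig: "real q powr \<tau> > cq (Suc n) powr \<tau>"
      using qbig cqpos[of "Suc n"] tau by (intro powr_less_mono2) auto
    consider (i) "cp (n+2) / cq (n+2) < XX" | (ii) "XX \<le> cp (n+2) / cq (n+2)" "n + 2 < m"
      | (iii) "n + 2 = m" using n2 by linarith
    then show False
    proof cases
      case i
      have j2: "conv_p \<alpha> (n+2) * int q - p * conv_q \<alpha> (n+2) \<ge> 1"
        using lt_int2[of "conv_q \<alpha> (n+2)" q p "conv_p \<alpha> (n+2)"] nxt cq_pos'[of "n+2"] q1
        unfolding \<rho>_def cp_def cq_def by simp
      have "cp (n+2) / cq (n+2) - \<rho> = real_of_int (conv_p \<alpha> (n+2) * int q - p * conv_q \<alpha> (n+2)) / (real q * cq (n+2))"
        using qq cqpos[of "n+2"] unfolding \<rho>_def cp_def cq_def by (simp add: field_simps)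
      moreover have "1 \<le> real_of_int (conv_p \<alpha> (n+2) * int q - p * conv_q \<alpha> (n+2))" using j2 by (metis of_int_1_le_iff)
      ultimately have "cp (n+2) / cq (n+2) - \<rho> \<ge> 1 / (real q * cq (n+2))"
        using qq cqpos[of "n+2"] by (simp add: divide_right_mono)
      then have "1 / (real q * cq (n+2)) < w" using i Hz zX by linarith
      then have "1 / (real q * cq (n+2)) < \<gamma> / (real q * real q powr \<tau>)" unfolding w_def by (simp add: powr_Suc'[OF qq])
      then have "1 * (real q * real q powr \<tau>) < \<gamma> * (real q * cq (n+2))"
        by (rule fl[rotated 2]) (use qq cqpos[of "n+2"] in auto)
      then have "real q * real q powr \<tau> < real q * (\<gamma> * cq (n+2))" by (simp add: algebra_simps)
      then have "real q powr \<tau> < \<gamma> * cq (Suc (Suc n))" using qq by simp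
      moreover have "\<gamma> * cq (Suc (Suc n)) \<le> cq (Suc n) powr \<tau>" using dio_conv[of "Suc n"] unfolding cq_def .
      ultimately show False using powbig by linarith
    next
      case ii
      have "cp (n+2) / cq (n+2) + \<gamma> / cq (n+2) powr (\<tau>+1) < XX"
        using nogood ii(2) nev unfolding cp_def cq_def by simp
      moreover have "\<gamma> / cq (n+2) powr (\<tau>+1) > 0" using gpos cqpos[of "n+2"] by simp
      ultimately show False using ii(1) by linarith
    next
      case iii
      define J where "J = conv_p \<alpha> m * int q - p * conv_q \<alpha> m"
      define I where "I = conv_p \<alpha> (Suc n) * int q - p * conv_q \<alpha> (Suc n)"
      have I1: "I \<ge> 1" using b2 I_def by simp
      have dm: "conv_p \<alpha> m * conv_q \<alpha> (Suc n) - conv_p \<alpha> (Suc n) * conv_q \<alpha> m = -1"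
        using cdet'[of "Suc n"] nev iii by (simp add: numeral_2_eq_2)
      have idt: "conv_q \<alpha> m * I = conv_q \<alpha> (Suc n) * J + int q"
      proof -
        have "conv_q \<alpha> (Suc n) * J - conv_q \<alpha> m * I
            = int q * (conv_p \<alpha> m * conv_q \<alpha> (Suc n) - conv_p \<alpha> (Suc n) * conv_q \<alpha> m)"
          unfolding I_def J_def by (simp add: algebra_simps)
        then show ?thesis using dm by simp
      qed
      have "conv_q \<alpha> m * I \<ge> conv_q \<alpha> m * 1" using I1 cq_pos'[of m] by (intro mult_left_mono) auto
      then have "conv_q \<alpha> (Suc n) * J \<ge> conv_q \<alpha> m - int q" using idt by simp
      then have cJ: "cq (Suc n) * of_int J \<ge> qm - real q" unfolding cq_def
        by (metis of_int_diff of_int_le_iff of_int_mult of_int_of_nat_eq)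
      have J1: "real_of_int J \<ge> 1" using j_ge1 J_def by (metis of_int_1_le_iff)
      have s1': "of_int J * real q powr \<tau> < 2 * \<gamma> * qm" using s1[OF small] unfolding J_def .
      have c1: "cq (Suc n) \<ge> 3" using cq_ge'[of "Suc n"] iii m4 unfolding cq_def by linarith
      have q4: "real q \<ge> 4"
      proof -
        have "int q > conv_q \<alpha> (Suc n)" using qbig unfolding cq_def by linarith
        moreover have "conv_q \<alpha> (Suc n) \<ge> 3" using c1 unfolding cq_def by linarith
        ultimately show ?thesis by linarith
      qed
      have pq3: "real q powr \<tau> \<ge> real q ^ 3" using q4 tau by (intro powr_ge_pow) auto
      show False
      proof (cases "2 * real q \<le> qm")
        case True
        then have "cq (Suc n) * of_int J \<ge> qm / 2" using cJ by linarith
        then have "2 * \<gamma> * qm \<le> 2 * \<gamma> * (2 * (cq (Suc n) * of_int J))" using gpos by (intro mult_left_mono) auto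
        then have "of_int J * real q powr \<tau> < of_int J * (4 * \<gamma> * cq (Suc n))" using s1' by (simp add: algebra_simps)
        then have "real q powr \<tau> < 4 * \<gamma> * cq (Suc n)" using J1 by simp
        moreover have "4 * \<gamma> * cq (Suc n) \<le> 4 * cq (Suc n)" using g1 c1 by simp
        moreover have "real q ^ 3 > cq (Suc n) ^ 3" using qbig c1 by (intro power_strict_mono) auto
        moreover have "cq (Suc n) ^ 3 \<ge> 16 * cq (Suc n) \<or> cq (Suc n) ^ 3 \<ge> 9 * cq (Suc n)"
        proof -
          have "cq (Suc n)^2 \<ge> 3^2" using c1 by (intro power_mono) auto
          then have "cq (Suc n) * cq (Suc n)^2 \<ge> cq (Suc n) * 9" using c1 by (intro mult_left_mono) auto
          then show ?thesis by (simp add: power3_eq_cube power2_eq_square algebra_simps)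
        qed
        ultimately show False using pq3 c1 by linarith
      next
        case False
        have "real q ^ 3 \<ge> 16 * real q" by (rule cube16[OF q4])
        then have "real q powr \<tau> \<ge> 8 * qm" using pq3 False by linarith
        moreover have "of_int J * real q powr \<tau> \<ge> 1 * real q powr \<tau>" using J1 by (intro mult_right_mono) auto
        moreover have "2 * \<gamma> * qm \<le> 2 * qm" using g1 qm4 by simp
        ultimately show False using s1' qm4 by linarith
      qed
    qed
  qed
qed

end


lemma Q0_big: "Q0 \<ge> 12 * qm"
proof -
  have "6 * \<gamma> * qm \<le> 6 * qm" using g1 qm4 by simp
  then have "12 * qm * (6 * \<gamma> * qm) \<le> 12 * qm * (6 * qm)" using qm4 by (intro mult_left_mono) auto
  then have "12 * qm * (6 * \<gamma> * qm) \<le> 72 * qm^2" by (simp add: power2_eq_square)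
  also have "\<dots> \<le> qm powr (\<tau> - 1)" by (rule qm_big)
  finally show ?thesis using gpos qm4 by (simp add: field_simps)
qed

lemma term_bound:
  assumes "real q \<ge> Q0"
  shows "real (card {\<lceil>real q * XX - 1\<rceil>..\<lfloor>real q * YY + 1\<rfloor>}) * (2 * (\<gamma> / real q powr (\<tau>+1)))
     \<le> (YY - XX) / 2 * (1 / (real q * (real q - 1)))"
proof -
  define W where "W = YY - XX"
  define x where "x = real q"
  define X where "X = x powr (\<tau>+1)"
  define P where "P = qm powr (\<tau> - 1)"
  have W: "W = 2 * \<gamma> / P" unfolding W_def P_def by simp
  have x48: "x \<ge> 48" using assms Q0_big qm4 unfolding x_def by linarith
  have Ppos: "P > 0" unfolding P_def using qm4 by simp
  have Wpos: "W > 0" unfolding W using gpos Ppos by simp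
  have Xpos: "X > 0" unfolding X_def using x48 by simp
  have card: "real (card {\<lceil>x * XX - 1\<rceil>..\<lfloor>x * YY + 1\<rfloor>}) \<le> x * W + 3"
  proof -
    have "real_of_int (\<lfloor>x * YY + 1\<rfloor> - \<lceil>x * XX - 1\<rceil> + 1) \<le> x * YY + 1 - (x * XX - 1) + 1"
      using fc[of "x * YY + 1" "x * XX - 1"] by simp
    moreover have "x * YY + 1 - (x * XX - 1) + 1 = x * W + 3" unfolding W_def by (simp add: algebra_simps)
    moreover have "x * W + 3 > 0" using x48 Wpos by (smt (verit) mult_pos_pos)
    ultimately show ?thesis by (simp add: card_atLeastAtMost_int)
  qed
  have a: "2 * \<gamma> / X * (x * W) \<le> W / (4 * (x * (x - 1)))"
  proof -
    have "8 * \<gamma> * (x^2 * (x - 1)) \<le> X" unfolding X_def using HA[of x \<tau> \<gamma>] x48 tau gpos g1 by simp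
    then have "W * (8 * \<gamma> * (x^2 * (x - 1))) \<le> W * X" using Wpos by (intro mult_left_mono) auto
    moreover have "x * (x - 1) > 0" using x48 by simp
    ultimately show ?thesis using Xpos by (simp add: field_simps power2_eq_square)
  qed
  have b: "2 * \<gamma> / X * 3 \<le> W / (4 * (x * (x - 1)))"
  proof -
    have "x \<ge> 12 * qm" using assms Q0_big unfolding x_def by linarith
    then have "12 * (x * (x - 1)) * P \<le> X" unfolding X_def P_def
      using HB[of qm x \<tau>] qm4 tau by simp
    then have "\<gamma> * (12 * (x * (x - 1)) * P) \<le> \<gamma> * X" using gpos by (intro mult_left_mono) auto
    moreover have "x * (x - 1) > 0" using x48 by simp
    ultimately show ?thesis unfolding W using Xpos Ppos by (simp add: field_simps)
  qed
  have "real (card {\<lceil>x * XX - 1\<rceil>..\<lfloor>x * YY + 1\<rfloor>}) * (2 * \<gamma> / X) \<le> (x * W + 3) * (2 * \<gamma> / X)"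
    using card gpos Xpos by (intro mult_right_mono) auto
  also have "\<dots> = 2 * \<gamma> / X * (x * W) + 2 * \<gamma> / X * 3" by (rule ring_distribs(2)[THEN trans]) (simp only: mult.commute)
  also have "\<dots> \<le> W / (4 * (x * (x - 1))) + W / (4 * (x * (x - 1)))" using a b by linarith
  also have "\<dots> = W / 2 * (1 / (x * (x - 1)))" by simp
  finally show ?thesis unfolding W_def x_def X_def by simp
qed

lemma claimA:
  assumes nogood: "\<forall>n<m. even n \<longrightarrow> real_of_int (conv_p \<alpha> n) / real_of_int (conv_q \<alpha> n)
      + \<gamma> / real_of_int (conv_q \<alpha> n) powr (\<tau>+1) < XX"
    and z: "XX \<le> z" "z \<le> YY" and q1: "q \<ge> 1"
    and H: "\<bar>z - of_int p / real q\<bar> < \<gamma> / real q powr (\<tau>+1)"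
  shows "real q > Q0"
proof -
  have za: "z < \<alpha>" using z Y_lt pm_lt by linarith
  have r1: "of_int p / real q < \<alpha>" by (rule A1[OF za q1 H])
  have r2: "\<not> pm / qm < of_int p / real q" by (rule A2[OF z(2) q1 H r1])
  have r3: "of_int p / real q \<noteq> pm / qm" by (rule A3[OF z(2) q1 H])
  have lt: "of_int p / real q < pm / qm" using r2 r3 by linarith
  show ?thesis
  proof (cases "real q \<ge> qm")
    case True then show ?thesis by (rule A4a[OF z q1 H lt])
  next
    case False
    then show ?thesis using A4b[OF z q1 H lt nogood] by simp
  qed
qed


lemma w_lt: assumes "q \<ge> 1" shows "\<gamma> / real q powr (\<tau>+1) < 1 / real q"
proof -
  have qq: "real q > 0" using assms by simp
  have "real q powr (\<tau>+1) \<ge> real q" using assms tau powr_ge_pow[where x="real q" and s="\<tau>+1" and k=1] by simp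
  then have "\<gamma> / real q powr (\<tau>+1) \<le> \<gamma> / real q" using qq gpos by (intro divide_left_mono) auto
  moreover have "\<gamma> / real q < 1 / real q" using g1 qq by (intro divide_strict_right_mono) auto
  ultimately show ?thesis by linarith
qed

lemma final_contra:
  assumes nogood: "\<forall>n<m. even n \<longrightarrow> real_of_int (conv_p \<alpha> n) / real_of_int (conv_q \<alpha> n)
      + \<gamma> / real_of_int (conv_q \<alpha> n) powr (\<tau>+1) < XX"
  shows False
proof -
  define w where "w q = \<gamma> / real q powr (\<tau>+1)" for q :: nat
  define c where "c = (\<lambda>(q::nat, p::int). of_int p / real q)"
  define d where "d = (\<lambda>(q::nat, p::int). w q)"
  define C where "C = {(q::nat, p::int). q \<ge> 1 \<and> (\<exists>z\<in>{XX..YY}. \<bar>z - of_int p / real q\<bar> < w q)}"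
  define f where "f i = {c i - d i <..< c i + d i}" for i
  have cov: "{XX..YY} \<subseteq> (\<Union>i\<in>C. f i)"
  proof
    fix z assume z: "z \<in> {XX..YY}"
    have z0: "0 < z" using z X_pos by auto
    have za: "z < \<alpha>" using z Y_lt pm_lt by auto
    have z1: "z < 1" using za a1 by linarith
    have "z \<notin> Dset \<gamma> \<tau>"
    proof
      assume "z \<in> Dset \<gamma> \<tau>"
      moreover have "\<bar>z - \<alpha>\<bar> < e" using z X_gt za by auto
      ultimately have "z = \<alpha>" using iso by blast
      then show False using za by simp
    qed
    then obtain q p where qp: "q \<ge> 1" "\<bar>z - of_int p / real q\<bar> < \<gamma> / real q powr (\<tau>+1)"
      using notD[OF z0 z1] by blast
    have "(q, p) \<in> C" unfolding C_def w_def using qp z by auto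
    moreover have "z \<in> f (q, p)" unfolding f_def c_def d_def w_def using qp by (auto simp: abs_less_iff)
    ultimately show "z \<in> (\<Union>i\<in>C. f i)" by blast
  qed
  obtain J where JC: "J \<subseteq> C" and finJ: "finite J" and covJ: "{XX..YY} \<subseteq> (\<Union>i\<in>J. f i)"
    by (rule compactE_image[OF compact_Icc _ cov]) (auto simp: f_def)
  have dnn: "d i \<ge> 0" for i unfolding d_def w_def using gpos by (auto split: prod.splits)
  have len: "YY - XX \<le> (\<Sum>i\<in>J. 2 * d i)"
    by (rule cover_len[OF finJ]) (use XY covJ dnn in \<open>auto simp: f_def\<close>)
  define P where "P q = {\<lceil>real q * XX - 1\<rceil>..\<lfloor>real q * YY + 1\<rfloor>}" for q :: nat
  define K where "K = nat \<lceil>Q0\<rceil>"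
  define M0 where "M0 = Max (insert K (fst ` J))"
  have Q0pos: "Q0 > 0" using Q0_big qm4 by linarith
  have K: "real K \<ge> Q0" unfolding K_def using Q0pos by linarith
  have K2: "K \<ge> 2" using K Q0_big qm4 by linarith
  have Jsub: "J \<subseteq> Sigma {K..M0} P"
  proof
    fix i assume iJ: "i \<in> J"
    obtain q p where i: "i = (q, p)" by (cases i)
    then obtain z where q1: "q \<ge> 1" and z: "z \<in> {XX..YY}" and H: "\<bar>z - of_int p / real q\<bar> < w q"
      using iJ JC unfolding C_def by auto
    have "real q > Q0" using claimA[OF nogood _ _ q1] z H unfolding w_def by auto
    then have "K \<le> q" unfolding K_def by (simp add: nat_le_iff ceiling_le_iff)
    moreover have "q \<le> M0" unfolding M0_def using finJ iJ i by (intro Max_ge) (auto simp: image_iff intro: bexI[of _ "(q,p)"])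
    moreover have "p \<in> P q"
    proof -
      have qq: "real q > 0" using q1 by simp
      have "\<bar>z - of_int p / real q\<bar> < 1 / real q" using H w_lt[OF q1] unfolding w_def by linarith
      then have "\<bar>real q * z - of_int p\<bar> / real q < 1 / real q" using absdiv[OF qq] by simp
      then have h: "\<bar>real q * z - of_int p\<bar> < 1" using qq by (simp add: divide_strict_right_mono_neg divide_less_eq)
      have "real q * XX \<le> real q * z" "real q * z \<le> real q * YY" using z qq by (auto intro: mult_left_mono)
      then have l1: "real q * XX - 1 \<le> of_int p" and l2: "of_int p \<le> real q * YY + 1" using h by (auto simp: abs_less_iff)
      have "\<lceil>real q * XX - 1\<rceil> \<le> p" using l1 by (simp only: ceiling_le_iff)
      moreover have "p \<le> \<lfloor>real q * YY + 1\<rfloor>" using l2 by (simp only: le_floor_iff)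
      ultimately show ?thesis unfolding P_def by (simp only: atLeastAtMost_iff)
    qed
    ultimately show "i \<in> Sigma {K..M0} P" using i by auto
  qed
  have finSig: "finite (Sigma {K..M0} P)" unfolding P_def by auto
  have "(\<Sum>i\<in>J. 2 * d i) \<le> (\<Sum>i\<in>Sigma {K..M0} P. 2 * d i)"
    by (rule sum_mono2[OF finSig Jsub]) (use dnn in auto)
  also have "\<dots> = (\<Sum>i\<in>Sigma {K..M0} P. (\<lambda>(q,p). 2 * w q) i)"
    by (rule sum.cong) (auto simp: d_def)
  also have "\<dots> = (\<Sum>q\<in>{K..M0}. \<Sum>p\<in>P q. 2 * w q)"
    by (rule sum.Sigma[symmetric]) (auto simp: P_def)
  also have "\<dots> = (\<Sum>q\<in>{K..M0}. real (card (P q)) * (2 * w q))" by simp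
  also have "\<dots> \<le> (\<Sum>q\<in>{K..M0}. (YY - XX) / 2 * (1 / (real q * (real q - 1))))"
  proof (rule sum_mono)
    fix q assume "q \<in> {K..M0}"
    then have "real q \<ge> Q0" using K by auto
    then show "real (card (P q)) * (2 * w q) \<le> (YY - XX) / 2 * (1 / (real q * (real q - 1)))"
      unfolding P_def w_def by (rule term_bound)
  qed
  also have "\<dots> = (YY - XX) / 2 * (\<Sum>q\<in>{K..M0}. 1 / (real q * (real q - 1)))"
    by (simp add: sum_distrib_left)
  also have "\<dots> \<le> (YY - XX) / 2 * (\<Sum>q\<in>{2..M0}. 1 / (real q * (real q - 1)))"
  proof -
    have "(\<Sum>q\<in>{K..M0}. 1 / (real q * (real q - 1))) \<le> (\<Sum>q\<in>{2..M0}. 1 / (real q * (real q - 1)))"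
      by (rule sum_mono2) (use K2 in auto)
    then show ?thesis using XY by (intro mult_left_mono) auto
  qed
  also have "\<dots> \<le> (YY - XX) / 2 * 1"
  proof -
    have "M0 \<ge> K" unfolding M0_def using finJ by (intro Max_ge) auto
    then have "(\<Sum>q\<in>{2..M0}. 1 / (real q * (real q - 1))) = 1 - 1 / real M0" using K2 by (intro tele) auto
    also have "\<dots> \<le> 1" by simp
    finally show ?thesis using XY by (intro mult_left_mono) auto
  qed
  finally have "YY - XX \<le> (YY - XX) / 2" using len by linarith
  then show False using lin3 XY by blast
qed

end


theorem lemma10:
  fixes \<tau> :: real
  assumes "\<tau> > 3"
  shows "AE \<gamma> in lborel. \<gamma> > 0 \<longrightarrow>
    (\<forall>\<alpha>. \<alpha> isolated_in Dset \<gamma> \<tau> \<longrightarrow>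
      (\<exists>N::nat. \<forall>m. even m \<and> m > N \<longrightarrow>
        (\<exists>n. even n \<and> n < m \<and>
          real_of_int (conv_p \<alpha> n) / real_of_int (conv_q \<alpha> n)
            + \<gamma> / real_of_int (conv_q \<alpha> n) powr (\<tau> + 1)
          \<ge> real_of_int (conv_p \<alpha> m) / real_of_int (conv_q \<alpha> m)
            - \<gamma> / real_of_int (conv_q \<alpha> m) powr (\<tau> + 1)
            - 2 * \<gamma> / real_of_int (conv_q \<alpha> m) powr (\<tau> - 1))))"
proof (rule AE_I2, intro impI allI)
  fix \<gamma> \<alpha> :: real
  assume "\<gamma> \<in> space lborel" and g: "\<gamma> > 0" and isol: "\<alpha> isolated_in Dset \<gamma> \<tau>"
  obtain T where aD: "\<alpha> \<in> Dset \<gamma> \<tau>" and T: "open T" "T \<inter> Dset \<gamma> \<tau> = {\<alpha>}"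
    using isol unfolding isolated_in_def by blast
  obtain e0 where e0: "e0 > 0" "ball \<alpha> e0 \<subseteq> T" using T(1) aD T(2) open_contains_ball by blast
  have a0: "\<alpha> > 0" using D_basic[OF aD g] by simp
  define e where "e = min e0 \<alpha>"
  have epos: "e > 0" using e0 a0 unfolding e_def by simp
  have ea: "e \<le> \<alpha>" unfolding e_def by simp
  have iso: "\<forall>y\<in>Dset \<gamma> \<tau>. \<bar>y - \<alpha>\<bar> < e \<longrightarrow> y = \<alpha>"
  proof (intro ballI impI)
    fix y assume y: "y \<in> Dset \<gamma> \<tau>" "\<bar>y - \<alpha>\<bar> < e"
    then have "y \<in> ball \<alpha> e0" unfolding e_def by (simp add: dist_real_def abs_minus_commute)
    then have "y \<in> T \<inter> Dset \<gamma> \<tau>" using e0 y by auto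
    then show "y = \<alpha>" using T(2) by auto
  qed
  define B where "B = max 4 (max (2 / sqrt e) (72 powr (1 / (\<tau> - 3))))"
  define N where "N = nat \<lceil>B\<rceil>"
  have irr: "\<alpha> \<notin> \<rat>" and a1: "\<alpha> < 1" using D_basic[OF aD g] by auto
  show "\<exists>N::nat. \<forall>m. even m \<and> m > N \<longrightarrow>
        (\<exists>n. even n \<and> n < m \<and>
          real_of_int (conv_p \<alpha> n) / real_of_int (conv_q \<alpha> n)
            + \<gamma> / real_of_int (conv_q \<alpha> n) powr (\<tau> + 1)
          \<ge> real_of_int (conv_p \<alpha> m) / real_of_int (conv_q \<alpha> m)
            - \<gamma> / real_of_int (conv_q \<alpha> m) powr (\<tau> + 1)
            - 2 * \<gamma> / real_of_int (conv_q \<alpha> m) powr (\<tau> - 1))"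
  proof (rule exI[of _ N], intro allI impI)
    fix m :: nat assume mm: "even m \<and> m > N"
    define qm where "qm = real_of_int (conv_q \<alpha> m)"
    have "real m > B" using mm unfolding N_def by linarith
    moreover have "qm \<ge> real m" using cq_ge[OF a0 a1 irr, of m] unfolding qm_def by simp
    ultimately have qB: "qm > B" by linarith
    have m4: "m \<ge> 4" using \<open>real m > B\<close> unfolding B_def by linarith
    have L1: "4 / qm^2 < e"
    proof -
      have s: "sqrt e > 0" using epos by simp
      have "qm > 2 / sqrt e" using qB unfolding B_def by linarith
      then have "qm * sqrt e > 2" using s by (simp add: divide_less_eq)
      then have "(qm * sqrt e)^2 > 2^2" using s by (intro power_strict_mono) auto
      then have "qm^2 * e > 4" using epos by (simp add: power_mult_distrib)
      moreover have "qm^2 > 0" using qB unfolding B_def by simp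
      ultimately show ?thesis by (simp add: divide_less_eq mult.commute)
    qed
    have L2: "qm powr (\<tau> - 3) \<ge> 72"
    proof -
      have "qm \<ge> 72 powr (1 / (\<tau> - 3))" using qB unfolding B_def by linarith
      then have "qm powr (\<tau> - 3) \<ge> (72 powr (1 / (\<tau> - 3))) powr (\<tau> - 3)"
        using assms by (intro powr_mono2) auto
      also have "(72 powr (1 / (\<tau> - 3))) powr (\<tau> - 3) = 72" using assms by (simp add: powr_powr)
      finally show ?thesis .
    qed
    show "\<exists>n. even n \<and> n < m \<and>
          real_of_int (conv_p \<alpha> n) / real_of_int (conv_q \<alpha> n)
            + \<gamma> / real_of_int (conv_q \<alpha> n) powr (\<tau> + 1)
          \<ge> real_of_int (conv_p \<alpha> m) / real_of_int (conv_q \<alpha> m)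
            - \<gamma> / real_of_int (conv_q \<alpha> m) powr (\<tau> + 1)
            - 2 * \<gamma> / real_of_int (conv_q \<alpha> m) powr (\<tau> - 1)"
    proof (rule ccontr)
      assume "\<not> ?thesis"
      then have nogood: "\<forall>n<m. even n \<longrightarrow> real_of_int (conv_p \<alpha> n) / real_of_int (conv_q \<alpha> n)
          + \<gamma> / real_of_int (conv_q \<alpha> n) powr (\<tau>+1)
          < real_of_int (conv_p \<alpha> m) / real_of_int (conv_q \<alpha> m)
            - \<gamma> / real_of_int (conv_q \<alpha> m) powr (\<tau> + 1)
            - 2 * \<gamma> / real_of_int (conv_q \<alpha> m) powr (\<tau> - 1)"
        by (auto simp: not_le)
      show False
        by (rule final_contra[OF assms g aD epos ea iso _ m4 L1[unfolded qm_def] L2[unfolded qm_def] nogood])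
          (use mm in auto)
    qed
  qed
qed


end
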